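(* For positive integers $a$ and $n$, $$M_n(a,1,1)=\sum_{k=0}^n\Psi_{n-1}(k,a,1,1).$$
   Context: All constant terms are taken with $\operatorname{CT}_x=\operatorname{CT}_{x_n}\cdots\operatorname{CT}_{x_1}$ (iterated constant-term extraction), where $(1-x_i)^{-b}$ and $x_i/(1-x_i)$ are expanded as power series in $x_i$, and for $i<j$, $(x_j-x_i)^{-c}=x_j^{-c}(1-x_i/x_j)^{-c}$ is expanded as a power series in $x_i/x_j$. $$M_n(a,b,c):=\operatorname{CT}_x\prod_{i=1}^n(1-x_i)^{-b}x_i^{-a+1}\prod_{1\le i<j\le n}(x_j-x_i)^{-c},$$ $$\Psi_n(k,a,b,c):=\operatorname{CT}_x[t^k]\prod_{i=1}^n(1-x_i)^{-b}x_i^{-a+1}\Big(1+t\frac{x_i}{1-x_i}\Big)\prod_{1\le i<j\le n}(x_j-x_i)^{-c},$$ with $[t^k]$ the coefficient of $t^k$; empty products equal $1$ (so $\Psi_0(k,\cdot)$ is $1$ for $k=0$ and $0$ otherwise). *)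

theory Defs
  imports Main
begin

text \<open>
  Monomials in the variables t, x_1, ..., x_n are represented by exponent vectors
  e :: nat => int, where e 0 is the exponent of t and e i (i >= 1) that of x_i.
  A (formal) series is given by its coefficient function (nat => int) => int.
  Each elementary factor of the products in M_n and Psi_n is expanded exactly as
  prescribed: (1-x_i)^(-b) as a power series in x_i, x_i/(1-x_i) as a power series
  in x_i, and for i<j, (x_j-x_i)^(-c) = x_j^(-c) (1-x_i/x_j)^(-c) as a power series
  in x_i/x_j.  All these lie in the iterated Laurent series field in which x_1 is
  the outermost variable, so the iterated constant term CT_{x_n}...CT_{x_1} of the
  product is the coefficient of x^0 of the product, i.e. the (finite) sum over all
  ways of choosing one monomial from each factor with product x^0.
\<close>

datatype fidx = Geo nat | Mon nat | Tfac nat | Vdm nat nat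

text \<open>coefficients of (1-x_i)^(-b) = sum_m binom(b+m-1,m) x_i^m\<close>
definition geo_coeff :: "nat \<Rightarrow> nat \<Rightarrow> (nat \<Rightarrow> int) \<Rightarrow> int" where
  "geo_coeff b i e =
     (if (\<forall>v. v \<noteq> i \<longrightarrow> e v = 0) \<and> e i \<ge> 0
      then int ((b + nat (e i) - 1) choose nat (e i)) else 0)"

definition mon_coeff :: "int \<Rightarrow> nat \<Rightarrow> (nat \<Rightarrow> int) \<Rightarrow> int" where
  "mon_coeff a i e = (if e = (\<lambda>v. if v = i then 1 - a else 0) then 1 else 0)"

text \<open>coefficients of 1 + t x_i/(1-x_i) = 1 + sum_{m>=1} t x_i^m\<close>
definition tfac_coeff :: "nat \<Rightarrow> (nat \<Rightarrow> int) \<Rightarrow> int" where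
  "tfac_coeff i e =
     (if e = (\<lambda>v. 0) then 1
      else if (\<forall>v. v \<noteq> 0 \<and> v \<noteq> i \<longrightarrow> e v = 0) \<and> e 0 = 1 \<and> e i \<ge> 1 then 1
      else 0)"

text \<open>coefficients of (x_j-x_i)^(-c) = sum_m binom(c+m-1,m) x_i^m x_j^(-c-m), for i<j\<close>
definition vdm_coeff :: "nat \<Rightarrow> nat \<Rightarrow> nat \<Rightarrow> (nat \<Rightarrow> int) \<Rightarrow> int" where
  "vdm_coeff c i j e =
     (if (\<forall>v. v \<noteq> i \<and> v \<noteq> j \<longrightarrow> e v = 0) \<and> e i \<ge> 0 \<and> e j = - int c - e i
      then int ((c + nat (e i) - 1) choose nat (e i)) else 0)"

fun fac :: "int \<Rightarrow> nat \<Rightarrow> nat \<Rightarrow> fidx \<Rightarrow> (nat \<Rightarrow> int) \<Rightarrow> int" where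
  "fac a b c (Geo i) = geo_coeff b i"
| "fac a b c (Mon i) = mon_coeff a i"
| "fac a b c (Tfac i) = tfac_coeff i"
| "fac a b c (Vdm i j) = vdm_coeff c i j"

definition coeff_prod :: "'i set \<Rightarrow> ('i \<Rightarrow> (nat \<Rightarrow> int) \<Rightarrow> int) \<Rightarrow> (nat \<Rightarrow> int) \<Rightarrow> int" where
  "coeff_prod I F e =
     (\<Sum>es \<in> {es. (\<forall>l\<in>I. F l (es l) \<noteq> 0) \<and> (\<forall>l. l \<notin> I \<longrightarrow> es l = (\<lambda>v. 0))
                 \<and> (\<forall>v. (\<Sum>l\<in>I. es l v) = e v)}.
        \<Prod>l\<in>I. F l (es l))"

definition M_factors :: "nat \<Rightarrow> fidx set" where
  "M_factors n = Geo ` {1..n} \<union> Mon ` {1..n} \<union> {Vdm i j |i j. 1 \<le> i \<and> i < j \<and> j \<le> n}"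

definition Psi_factors :: "nat \<Rightarrow> fidx set" where
  "Psi_factors n = M_factors n \<union> Tfac ` {1..n}"

definition M :: "nat \<Rightarrow> int \<Rightarrow> nat \<Rightarrow> nat \<Rightarrow> int" where
  "M n a b c = coeff_prod (M_factors n) (fac a b c) (\<lambda>v. 0)"

definition Psi :: "nat \<Rightarrow> nat \<Rightarrow> int \<Rightarrow> nat \<Rightarrow> nat \<Rightarrow> int" where
  "Psi n k a b c = coeff_prod (Psi_factors n) (fac a b c) (\<lambda>v. if v = 0 then int k else 0)"

end

theory Submission
  imports Defs
begin

lemma MF_mem[simp]:
  "Geo i \<in> M_factors n \<longleftrightarrow> 1 \<le> i \<and> i \<le> n"
  "Mon i \<in> M_factors n \<longleftrightarrow> 1 \<le> i \<and> i \<le> n"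
  "Vdm i j \<in> M_factors n \<longleftrightarrow> 1 \<le> i \<and> i < j \<and> j \<le> n"
  "Tfac i \<notin> M_factors n"
  by (auto simp: M_factors_def)

lemma PF_mem[simp]:
  "Geo i \<in> Psi_factors n \<longleftrightarrow> 1 \<le> i \<and> i \<le> n"
  "Mon i \<in> Psi_factors n \<longleftrightarrow> 1 \<le> i \<and> i \<le> n"
  "Vdm i j \<in> Psi_factors n \<longleftrightarrow> 1 \<le> i \<and> i < j \<and> j \<le> n"
  "Tfac i \<in> Psi_factors n \<longleftrightarrow> 1 \<le> i \<and> i \<le> n"
  by (auto simp: Psi_factors_def)

lemma finite_MF[simp]: "finite (M_factors n)"
proof -
  have "{Vdm i j |i j. 1 \<le> i \<and> i < j \<and> j \<le> n} \<subseteq> (\<lambda>(i,j). Vdm i j) ` ({1..n}\<times>{1..n})"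
    by auto
  then have "finite {Vdm i j |i j. 1 \<le> i \<and> i < j \<and> j \<le> n}"
    by (rule finite_subset) auto
  then show ?thesis by (simp add: M_factors_def)
qed

lemma finite_PF[simp]: "finite (Psi_factors n)"
  by (simp add: Psi_factors_def)

lemma fac_one: "fac a 1 1 l e \<noteq> 0 \<Longrightarrow> fac a 1 1 l e = 1"
  by (cases l) (auto simp: geo_coeff_def mon_coeff_def tfac_coeff_def vdm_coeff_def split: if_splits)

lemma geo_nz: "fac a 1 1 (Geo i) e \<noteq> 0 \<longleftrightarrow> (\<forall>v. v \<noteq> i \<longrightarrow> e v = 0) \<and> e i \<ge> 0"
  by (auto simp: geo_coeff_def)
lemma mon_nz: "fac a 1 1 (Mon i) e \<noteq> 0 \<longleftrightarrow> e = (\<lambda>v. if v = i then 1 - a else 0)"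
  by (auto simp: mon_coeff_def)
lemma vdm_nz: "fac a 1 1 (Vdm i j) e \<noteq> 0 \<longleftrightarrow> (\<forall>v. v \<noteq> i \<and> v \<noteq> j \<longrightarrow> e v = 0) \<and> e i \<ge> 0 \<and> e j = -1 - e i"
  by (auto simp: vdm_coeff_def)
lemma tfac_nz: "fac a 1 1 (Tfac i) e \<noteq> 0 \<longleftrightarrow> e = (\<lambda>v. 0) \<or> ((\<forall>v. v \<noteq> 0 \<and> v \<noteq> i \<longrightarrow> e v = 0) \<and> e 0 = 1 \<and> e i \<ge> 1)"
  by (auto simp: tfac_coeff_def)

lemma coeff_prod_card:
  assumes "\<And>l e. l \<in> I \<Longrightarrow> F l e \<noteq> 0 \<Longrightarrow> F l e = 1"
  shows "coeff_prod I F e = int (card {es. (\<forall>l\<in>I. F l (es l) \<noteq> 0) \<and> (\<forall>l. l \<notin> I \<longrightarrow> es l = (\<lambda>v. 0))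
                 \<and> (\<forall>v. (\<Sum>l\<in>I. es l v) = e v)})"
  unfolding coeff_prod_def
  by (subst sum.cong[OF refl, where h="\<lambda>_. 1"]) (auto simp: assms)

definition SA where "SA n a = {es. (\<forall>l\<in>M_factors n. fac a 1 1 l (es l) \<noteq> 0) \<and> (\<forall>l. l \<notin> M_factors n \<longrightarrow> es l = (\<lambda>v. 0))
                 \<and> (\<forall>v. (\<Sum>l\<in>M_factors n. es l v) = 0)}"
definition SB where "SB p k a = {es. (\<forall>l\<in>Psi_factors p. fac a 1 1 l (es l) \<noteq> 0) \<and> (\<forall>l. l \<notin> Psi_factors p \<longrightarrow> es l = (\<lambda>v. 0))
                 \<and> (\<forall>v. (\<Sum>l\<in>Psi_factors p. es l v) = (if v = 0 then int k else 0))}"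

lemma M_card: "M n a 1 1 = int (card (SA n a))"
  unfolding M_def SA_def by (subst coeff_prod_card) (auto intro: fac_one[simplified])

lemma Psi_card: "Psi p k a 1 1 = int (card (SB p k a))"
  unfolding Psi_def SB_def by (subst coeff_prod_card) (auto intro: fac_one[simplified])

lemma support:
  assumes "l \<in> M_factors m" "fac a 1 1 l e \<noteq> 0" "v = 0 \<or> m < v"
  shows "e v = 0"
  using assms by (cases l) (auto simp: geo_coeff_def mon_coeff_def vdm_coeff_def split: if_splits)

lemma MF_Suc: "M_factors (Suc p) = M_factors p \<union> {Geo (Suc p), Mon (Suc p)} \<union> (\<lambda>i. Vdm i (Suc p)) ` {1..p}"
  apply (rule set_eqI)
  subgoal for x by (cases x) auto
  done

lemma MF_sub: "l \<in> M_factors p \<Longrightarrow> l \<in> M_factors (Suc p)"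
  unfolding MF_Suc by auto

lemma PF_eq: "Psi_factors p = M_factors p \<union> Tfac ` {1..p}"
  by (simp add: Psi_factors_def)

lemma sum_MF_Suc:
  fixes f :: "fidx \<Rightarrow> int"
  shows "(\<Sum>l\<in>M_factors (Suc p). f l) = (\<Sum>l\<in>M_factors p. f l) + f (Geo (Suc p)) + f (Mon (Suc p)) + (\<Sum>i=1..p. f (Vdm i (Suc p)))"
proof -
  have d1: "(M_factors p \<union> {Geo (Suc p), Mon (Suc p)}) \<inter> (\<lambda>i. Vdm i (Suc p)) ` {1..p} = {}" by auto
  have d2: "M_factors p \<inter> {Geo (Suc p), Mon (Suc p)} = {}" by auto
  have inj: "inj_on (\<lambda>i. Vdm i (Suc p)) {1..p}" by (auto simp: inj_on_def)
  show ?thesis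
    unfolding MF_Suc
    apply (subst sum.union_disjoint[OF _ _ d1], simp, simp)
    apply (subst sum.union_disjoint[OF _ _ d2], simp, simp)
    apply (subst sum.reindex[OF inj])
    apply (simp add: algebra_simps)
    done
qed

lemma sum_PF:
  fixes f :: "fidx \<Rightarrow> int"
  shows "(\<Sum>l\<in>Psi_factors p. f l) = (\<Sum>l\<in>M_factors p. f l) + (\<Sum>i=1..p. f (Tfac i))"
proof -
  have d: "M_factors p \<inter> Tfac ` {1..p} = {}" by auto
  have inj: "inj_on Tfac {1..p}" by (auto simp: inj_on_def)
  show ?thesis unfolding PF_eq
    apply (subst sum.union_disjoint[OF _ _ d], simp, simp)
    apply (subst sum.reindex[OF inj])
    apply simp
    done
qed

definition tf :: "int \<Rightarrow> nat \<Rightarrow> nat \<Rightarrow> int" where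
  "tf m i = (if m = 0 then (\<lambda>v. 0) else (\<lambda>v. if v = 0 then 1 else if v = i then m else 0))"
lemma tf_apply: "tf m i v = (if m = 0 then 0 else if v = 0 then 1 else if v = i then m else 0)"
  by (simp add: tf_def)

definition vd :: "int \<Rightarrow> nat \<Rightarrow> nat \<Rightarrow> nat \<Rightarrow> int" where
  "vd m i j = (\<lambda>v. if v = i then m else if v = j then -1-m else 0)"
definition chi :: "nat \<Rightarrow> (fidx \<Rightarrow> nat \<Rightarrow> int) \<Rightarrow> fidx \<Rightarrow> nat \<Rightarrow> int" where
  "chi p es l = (case l of Tfac i \<Rightarrow> if 1 \<le> i \<and> i \<le> p then tf (es (Vdm i (Suc p)) i) i else (\<lambda>v. 0)
     | Geo i \<Rightarrow> if i = Suc p then (\<lambda>v. 0) else es l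
     | Mon i \<Rightarrow> if i = Suc p then (\<lambda>v. 0) else es l
     | Vdm i j \<Rightarrow> if j = Suc p then (\<lambda>v. 0) else es l)"

lemma chi_MF: "l \<in> M_factors p \<Longrightarrow> chi p es l = es l"
  by (cases l) (auto simp: chi_def)

lemma chi_in:
  assumes "es \<in> SA (Suc p) a"
  shows "\<exists>k\<in>{0..Suc p}. chi p es \<in> SB p k a"
proof -
  have nz: "\<And>l. l \<in> M_factors (Suc p) \<Longrightarrow> fac a 1 1 l (es l) \<noteq> 0"
    and out: "\<And>l. l \<notin> M_factors (Suc p) \<Longrightarrow> es l = (\<lambda>v. 0)"
    and sm: "\<And>v. (\<Sum>l\<in>M_factors (Suc p). es l v) = 0"
    using assms by (auto simp: SA_def)
  define m where "m i = es (Vdm i (Suc p)) i" for i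
  have vdmi: "es (Vdm i (Suc p)) = vd (m i) i (Suc p)" "m i \<ge> 0" if "1 \<le> i" "i \<le> p" for i
  proof -
    have "fac a 1 1 (Vdm i (Suc p)) (es (Vdm i (Suc p))) \<noteq> 0" using nz[of "Vdm i (Suc p)"] that by simp
    then show "es (Vdm i (Suc p)) = vd (m i) i (Suc p)" "m i \<ge> 0"
      unfolding vdm_nz m_def vd_def by auto
  qed
  have geo: "es (Geo (Suc p)) v = 0" if "v \<noteq> Suc p" for v
    using nz[of "Geo (Suc p)"] that unfolding geo_nz by auto
  have mon: "es (Mon (Suc p)) v = 0" if "v \<noteq> Suc p" for v
    using nz[of "Mon (Suc p)"] that unfolding mon_nz by auto
  have suppMF: "(\<Sum>l\<in>M_factors p. es l v) = 0" if "v = 0 \<or> p < v" for v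
  proof (rule sum.neutral, intro ballI)
    fix l assume l: "l \<in> M_factors p"
    show "es l v = 0" by (rule support[OF l nz[OF MF_sub[OF l]] that])
  qed
  have sPF: "(\<Sum>l\<in>Psi_factors p. chi p es l v) = (\<Sum>l\<in>M_factors p. es l v) + (\<Sum>i=1..p. tf (m i) i v)" for v
    unfolding sum_PF by (simp add: chi_MF cong: sum.cong) (simp add: chi_def m_def)
  have A1: "\<forall>l\<in>Psi_factors p. fac a 1 1 l (chi p es l) \<noteq> 0"
  proof
    fix l assume l: "l \<in> Psi_factors p"
    show "fac a 1 1 l (chi p es l) \<noteq> 0"
    proof (cases "l \<in> M_factors p")
      case True then show ?thesis using nz[OF MF_sub[OF True]] by (simp add: chi_MF)
    next
      case False
      with l obtain i where i: "l = Tfac i" "1 \<le> i" "i \<le> p" unfolding PF_eq by auto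
      then show ?thesis using vdmi(2)[of i]
        by (auto simp: chi_def tfac_coeff_def tf_def m_def)
    qed
  qed
  have A2: "\<forall>l. l \<notin> Psi_factors p \<longrightarrow> chi p es l = (\<lambda>v. 0)"
  proof (intro allI impI)
    fix l assume "l \<notin> Psi_factors p"
    then show "chi p es l = (\<lambda>v. 0)"
      by (cases l) (auto simp: chi_def out)
  qed
  have A3: "(\<Sum>l\<in>Psi_factors p. chi p es l v) = 0" if "v \<noteq> 0" for v
  proof (cases "v = Suc p")
    case True
    then show ?thesis unfolding sPF using suppMF[of v] by (auto simp: tf_apply intro!: sum.neutral)
  next
    case False
    have "0 = (\<Sum>l\<in>M_factors (Suc p). es l v)" using sm by simp
    also have "\<dots> = (\<Sum>l\<in>M_factors p. es l v) + (\<Sum>i=1..p. tf (m i) i v)"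
    proof -
      have "(\<Sum>i=1..p. es (Vdm i (Suc p)) v) = (\<Sum>i=1..p. tf (m i) i v)"
        by (rule sum.cong[OF refl]) (use False that in \<open>auto simp: vdmi vd_def tf_apply\<close>)
      then show ?thesis unfolding sum_MF_Suc using False by (simp add: geo mon)
    qed
    finally show ?thesis unfolding sPF by simp
  qed
  define K where "K = (\<Sum>l\<in>Psi_factors p. chi p es l 0)"
  have K: "K = (\<Sum>i=1..p. tf (m i) i 0)" unfolding K_def sPF using suppMF[of 0] by simp
  have K0: "0 \<le> K" unfolding K by (rule sum_nonneg) (simp add: tf_apply)
  have "K \<le> (\<Sum>i=1..p. 1)" unfolding K by (rule sum_mono) (simp add: tf_apply)
  then have K1: "K \<le> int p" by simp
  have "chi p es \<in> SB p (nat K) a"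
    unfolding SB_def using A1 A2 A3 K0 by (auto simp: K_def)
  moreover have "nat K \<in> {0..Suc p}" using K1 by simp
  ultimately show ?thesis by blast
qed

definition rho0 :: "int \<Rightarrow> nat \<Rightarrow> (fidx \<Rightarrow> nat \<Rightarrow> int) \<Rightarrow> fidx \<Rightarrow> nat \<Rightarrow> int" where
  "rho0 a p es l = (case l of Tfac i \<Rightarrow> (\<lambda>v. 0)
     | Geo i \<Rightarrow> if i = Suc p then (\<lambda>v. 0) else es l
     | Mon i \<Rightarrow> if i = Suc p then (\<lambda>v. if v = Suc p then 1 - a else 0) else es l
     | Vdm i j \<Rightarrow> if j = Suc p \<and> 1 \<le> i \<and> i \<le> p then vd (es (Tfac i) i) i (Suc p) else es l)"

definition rho :: "int \<Rightarrow> nat \<Rightarrow> (fidx \<Rightarrow> nat \<Rightarrow> int) \<Rightarrow> fidx \<Rightarrow> nat \<Rightarrow> int" where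
  "rho a p es = (rho0 a p es)(Geo (Suc p) := (\<lambda>v. if v = Suc p then - (\<Sum>l\<in>M_factors (Suc p). rho0 a p es l (Suc p)) else 0))"

lemma MF_Suc_cases:
  assumes "l \<in> M_factors (Suc p)"
  obtains "l \<in> M_factors p" | "l = Geo (Suc p)" | "l = Mon (Suc p)" | i where "1 \<le> i" "i \<le> p" "l = Vdm i (Suc p)"
  using assms unfolding MF_Suc by auto

lemma rho_in:
  assumes a: "0 < a" and es: "es \<in> SB p k a"
  shows "rho a p es \<in> SA (Suc p) a"
proof -
  have nz: "\<And>l. l \<in> Psi_factors p \<Longrightarrow> fac a 1 1 l (es l) \<noteq> 0"
    and out: "\<And>l. l \<notin> Psi_factors p \<Longrightarrow> es l = (\<lambda>v. 0)"
    and sm: "\<And>v. (\<Sum>l\<in>Psi_factors p. es l v) = (if v = 0 then int k else 0)"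
    using es by (auto simp: SB_def)
  have nzM: "fac a 1 1 l (es l) \<noteq> 0" if "l \<in> M_factors p" for l
    using nz[of l] that unfolding PF_eq by blast
  define m where "m i = es (Tfac i) i" for i
  have tfi: "m i \<ge> 0" "\<And>v. v \<noteq> 0 \<Longrightarrow> es (Tfac i) v = (if v = i then m i else 0)"
    if "1 \<le> i" "i \<le> p" for i
  proof -
    have "tfac_coeff i (es (Tfac i)) \<noteq> 0" using nz[of "Tfac i"] that by simp
    then show "m i \<ge> 0" "\<And>v. v \<noteq> 0 \<Longrightarrow> es (Tfac i) v = (if v = i then m i else 0)"
      unfolding tfac_coeff_def m_def by (auto split: if_splits)
  qed
  have r0V: "rho0 a p es (Vdm i (Suc p)) = vd (m i) i (Suc p)" if "1 \<le> i" "i \<le> p" for i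
    using that by (simp add: rho0_def m_def)
  have r0MF: "rho0 a p es l = es l" if "l \<in> M_factors p" for l
    using that by (cases l) (auto simp: rho0_def)
  have rr0: "rho a p es l = rho0 a p es l" if "l \<noteq> Geo (Suc p)" for l
    using that by (simp add: rho_def)
  define S where "S = (\<Sum>l\<in>M_factors (Suc p). rho0 a p es l (Suc p))"
  have rG: "rho a p es (Geo (Suc p)) = (\<lambda>v. if v = Suc p then - S else 0)"
    unfolding rho_def S_def by simp
  have S0: "S \<le> 0" unfolding S_def
  proof (rule sum_nonpos)
    fix l assume l: "l \<in> M_factors (Suc p)"
    show "rho0 a p es l (Suc p) \<le> 0"
      using l
    proof (cases rule: MF_Suc_cases)
      case 1 then show ?thesis using support[OF 1 nzM[OF 1], of "Suc p"] r0MF[OF 1] by simp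
    next
      case 2 then show ?thesis by (simp add: rho0_def)
    next
      case 3 then show ?thesis using a by (simp add: rho0_def)
    next
      case (4 i) then show ?thesis using tfi[of i] by (simp add: r0V vd_def)
    qed
  qed
  have B1: "fac a 1 1 l (rho a p es l) \<noteq> 0" if l: "l \<in> M_factors (Suc p)" for l
    using l
  proof (cases rule: MF_Suc_cases)
    case 1
    then have "l \<noteq> Geo (Suc p)" by auto
    then show ?thesis using nzM[OF 1] rr0 r0MF[OF 1] by simp
  next
    case 2 then show ?thesis using S0 by (simp add: rG geo_coeff_def)
  next
    case 3 then show ?thesis by (simp add: rr0 rho0_def mon_coeff_def)
  next
    case (4 i) then show ?thesis using tfi[of i] by (simp add: rr0 r0V vd_def vdm_coeff_def)
  qed
  have B2: "rho a p es l = (\<lambda>v. 0)" if l: "l \<notin> M_factors (Suc p)" for l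
  proof -
    have "l \<noteq> Geo (Suc p)" using l by auto
    then show ?thesis using l by (cases l) (auto simp: rr0 rho0_def out)
  qed
  have B3: "(\<Sum>l\<in>M_factors (Suc p). rho a p es l v) = 0" for v
  proof -
    consider "v = Suc p" | "v = 0" | "v \<noteq> Suc p" "v \<noteq> 0" by blast
    then show ?thesis
    proof cases
      case 1
      have G: "Geo (Suc p) \<in> M_factors (Suc p)" by simp
      have "(\<Sum>l\<in>M_factors (Suc p). rho a p es l v) = rho a p es (Geo (Suc p)) v + (\<Sum>l\<in>M_factors (Suc p) - {Geo (Suc p)}. rho a p es l v)"
        by (rule sum.remove[OF finite_MF G])
      also have "(\<Sum>l\<in>M_factors (Suc p) - {Geo (Suc p)}. rho a p es l v) = (\<Sum>l\<in>M_factors (Suc p) - {Geo (Suc p)}. rho0 a p es l v)"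
        by (rule sum.cong) (auto simp: rr0)
      also have "S = rho0 a p es (Geo (Suc p)) v + (\<Sum>l\<in>M_factors (Suc p) - {Geo (Suc p)}. rho0 a p es l v)"
        unfolding S_def 1 by (rule sum.remove[OF finite_MF G])
      ultimately show ?thesis using 1 by (simp add: rG rho0_def)
    next
      case 2
      show ?thesis
      proof (rule sum.neutral, intro ballI)
        fix l assume l: "l \<in> M_factors (Suc p)"
        show "rho a p es l v = 0" using support[OF l B1[OF l]] 2 by simp
      qed
    next
      case 3
      have "(\<Sum>l\<in>M_factors (Suc p). rho a p es l v) = (\<Sum>l\<in>M_factors p. es l v) + (\<Sum>i=1..p. es (Tfac i) v)"
      proof -
        have e1: "(\<Sum>l\<in>M_factors p. rho a p es l v) = (\<Sum>l\<in>M_factors p. es l v)"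
          by (rule sum.cong[OF refl]) (metis MF_mem(1) le_refl not_less_eq_eq r0MF rr0)
        have e2: "(\<Sum>i=1..p. rho a p es (Vdm i (Suc p)) v) = (\<Sum>i=1..p. es (Tfac i) v)"
          by (rule sum.cong[OF refl]) (use 3 tfi in \<open>auto simp: rr0 r0V vd_def\<close>)
        show ?thesis unfolding sum_MF_Suc e1 e2 using 3 by (simp add: rG rr0 rho0_def)
      qed
      also have "\<dots> = 0" using sm[of v] 3 unfolding sum_PF by simp
      finally show ?thesis .
    qed
  qed
  show ?thesis unfolding SA_def using B1 B2 B3 by blast
qed

lemma rho_chi:
  assumes es: "es \<in> SA (Suc p) a"
  shows "rho a p (chi p es) = es"
proof -
  have nz: "\<And>l. l \<in> M_factors (Suc p) \<Longrightarrow> fac a 1 1 l (es l) \<noteq> 0"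
    and out: "\<And>l. l \<notin> M_factors (Suc p) \<Longrightarrow> es l = (\<lambda>v. 0)"
    and sm: "\<And>v. (\<Sum>l\<in>M_factors (Suc p). es l v) = 0"
    using es by (auto simp: SA_def)
  have R: "rho0 a p (chi p es) l = (if l = Geo (Suc p) then (\<lambda>v. 0) else es l)" for l
  proof (cases l)
    case (Geo i) then show ?thesis by (simp add: rho0_def chi_def)
  next
    case (Mon i)
    show ?thesis
    proof (cases "i = Suc p")
      case True
      have "mon_coeff a i (es (Mon i)) \<noteq> 0" using nz[of "Mon i"] True by simp
      then show ?thesis using Mon True by (auto simp: rho0_def mon_coeff_def split: if_splits)
    qed (simp add: Mon rho0_def chi_def)
  next
    case (Tfac i) then show ?thesis using out[of l] by (simp add: rho0_def)
  next
    case (Vdm i j)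
    show ?thesis
    proof (cases "j = Suc p \<and> 1 \<le> i \<and> i \<le> p")
      case True
      have "vdm_coeff 1 i j (es (Vdm i j)) \<noteq> 0" using nz[of "Vdm i j"] True by simp
      then show ?thesis using Vdm True
        by (auto simp: rho0_def chi_def tf_apply vd_def vdm_coeff_def split: if_splits)
    next
      case False
      then show ?thesis using Vdm out[of l] by (auto simp: rho0_def chi_def)
    qed
  qed
  have G: "Geo (Suc p) \<in> M_factors (Suc p)" by simp
  have "(\<Sum>l\<in>M_factors (Suc p). rho0 a p (chi p es) l (Suc p)) = (\<Sum>l\<in>M_factors (Suc p) - {Geo (Suc p)}. es l (Suc p))"
    by (subst sum.remove[OF finite_MF G]) (auto simp: R intro!: sum.cong)
  also have "\<dots> = - es (Geo (Suc p)) (Suc p)"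
    using sm[of "Suc p"] sum.remove[OF finite_MF G, of "\<lambda>l. es l (Suc p)"] by simp
  finally have S: "(\<Sum>l\<in>M_factors (Suc p). rho0 a p (chi p es) l (Suc p)) = - es (Geo (Suc p)) (Suc p)" .
  have g: "es (Geo (Suc p)) v = 0" if "v \<noteq> Suc p" for v
    using nz[of "Geo (Suc p)"] that by (simp add: geo_coeff_def split: if_splits)
  show ?thesis
  proof (rule ext)
    fix l show "rho a p (chi p es) l = es l"
      unfolding rho_def using S g by (auto simp: R)
  qed
qed

lemma chi_rho:
  assumes es: "es \<in> SB p k a"
  shows "chi p (rho a p es) = es"
proof -
  have nz: "\<And>l. l \<in> Psi_factors p \<Longrightarrow> fac a 1 1 l (es l) \<noteq> 0"
    and out: "\<And>l. l \<notin> Psi_factors p \<Longrightarrow> es l = (\<lambda>v. 0)"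
    using es by (auto simp: SB_def)
  show ?thesis
  proof (rule ext)
    fix l show "chi p (rho a p es) l = es l"
    proof (cases l)
      case (Tfac i)
      show ?thesis
      proof (cases "1 \<le> i \<and> i \<le> p")
        case True
        have "tfac_coeff i (es (Tfac i)) \<noteq> 0" using nz[of "Tfac i"] True by simp
        then have "tf (es (Tfac i) i) i = es (Tfac i)"
          unfolding tfac_coeff_def tf_def by (auto split: if_splits)
        then show ?thesis using Tfac True by (simp add: chi_def rho_def rho0_def vd_def)
      next
        case False then show ?thesis using Tfac out[of l] by (auto simp: chi_def)
      qed
    next
      case (Geo i) then show ?thesis using out[of l] by (auto simp: chi_def rho_def rho0_def)
    next
      case (Mon i) then show ?thesis using out[of l] by (auto simp: chi_def rho_def rho0_def)
    next
      case (Vdm i j) then show ?thesis using out[of l] by (auto simp: chi_def rho_def rho0_def)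
    qed
  qed
qed

lemma sum_two:
  fixes f :: "nat \<Rightarrow> int"
  assumes "finite S" "i \<in> S" "j \<in> S" "i \<noteq> j" "\<And>v. v \<in> S \<Longrightarrow> v \<noteq> i \<Longrightarrow> v \<noteq> j \<Longrightarrow> f v = 0"
  shows "sum f S = f i + f j"
proof -
  have "sum f S = f i + sum f (S - {i})" by (rule sum.remove[OF assms(1,2)])
  also have "sum f (S - {i}) = f j + sum f (S - {i} - {j})"
    by (rule sum.remove) (use assms in auto)
  also have "sum f (S - {i} - {j}) = 0" by (rule sum.neutral) (use assms in auto)
  finally show ?thesis by simp
qed

lemma sum_one:
  fixes f :: "nat \<Rightarrow> int"
  assumes "finite S" "i \<in> S" "\<And>v. v \<in> S \<Longrightarrow> v \<noteq> i \<Longrightarrow> f v = 0"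
  shows "sum f S = f i"
proof -
  have "sum f S = f i + sum f (S - {i})" by (rule sum.remove[OF assms(1,2)])
  also have "sum f (S - {i}) = 0" by (rule sum.neutral) (use assms in auto)
  finally show ?thesis by simp
qed

lemma finite_SA:
  assumes a: "0 < a"
  shows "finite (SA n a)"
proof -
  define I where "I = M_factors n"
  define w :: "nat \<Rightarrow> int" where "w v = int n + 1 - int v" for v
  define L where "L f = (\<Sum>v\<in>{1..n}. w v * f v)" for f :: "nat \<Rightarrow> int"
  define C where "C = int n * a"
  define N where "N = int (card I) * C + int n + a + 1"
  have C0: "0 \<le> C" using a by (simp add: C_def)
  have bound: "\<bar>es l v\<bar> \<le> N" if es: "es \<in> SA n a" and l: "l \<in> I" for es l v
  proof -
    have nz: "\<And>l. l \<in> I \<Longrightarrow> fac a 1 1 l (es l) \<noteq> 0"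
      and sm: "\<And>v. (\<Sum>l\<in>I. es l v) = 0"
      using es by (auto simp: SA_def I_def)
    have tot: "(\<Sum>l\<in>I. L (es l)) = 0"
    proof -
      have "(\<Sum>l\<in>I. L (es l)) = (\<Sum>v\<in>{1..n}. w v * (\<Sum>l\<in>I. es l v))"
        unfolding L_def sum_distrib_left by (rule sum.swap)
      also have "\<dots> = 0" by (simp add: sm)
      finally show ?thesis .
    qed
    have Lval: "L (es l) \<ge> (case l of Geo i \<Rightarrow> es l i | Mon i \<Rightarrow> - C | Vdm i j \<Rightarrow> es l i - int n | Tfac i \<Rightarrow> 0)"
      if l: "l \<in> I" for l
    proof (cases l)
      case (Geo i)
      with l have i: "1 \<le> i" "i \<le> n" by (auto simp: I_def)
      have e: "fac a 1 1 (Geo i) (es l) \<noteq> 0" using nz[OF l] Geo by simp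
      then have z: "\<And>v. v \<noteq> i \<Longrightarrow> es l v = 0" and g: "es l i \<ge> 0" unfolding geo_nz by auto
      have "L (es l) = w i * es l i" unfolding L_def by (rule sum_one) (use i z in auto)
      moreover have "w i * es l i \<ge> 1 * es l i" by (rule mult_right_mono) (use i g in \<open>auto simp: w_def\<close>)
      ultimately show ?thesis using Geo by simp
    next
      case (Mon i)
      with l have i: "1 \<le> i" "i \<le> n" by (auto simp: I_def)
      have e: "es l = (\<lambda>v. if v = i then 1 - a else 0)" using nz[OF l] Mon mon_nz by metis
      have "L (es l) = w i * (1 - a)" unfolding L_def by (rule trans[OF sum_one[of _ i]]) (use i e in auto)
      moreover have "w i * (1 - a) \<ge> int n * (1 - a)"
        by (rule mult_right_mono_neg) (use i a in \<open>auto simp: w_def\<close>)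
      ultimately show ?thesis using Mon by (simp add: C_def algebra_simps)
    next
      case (Tfac i) with l show ?thesis by (simp add: I_def)
    next
      case (Vdm i j)
      with l have i: "1 \<le> i" "i < j" "j \<le> n" by (auto simp: I_def)
      have e: "fac a 1 1 (Vdm i j) (es l) \<noteq> 0" using nz[OF l] Vdm by simp
      then have z: "\<And>v. v \<noteq> i \<Longrightarrow> v \<noteq> j \<Longrightarrow> es l v = 0" and g: "es l i \<ge> 0"
        and ej: "es l j = -1 - es l i" unfolding vdm_nz by auto
      have "L (es l) = w i * es l i + w j * es l j" unfolding L_def by (rule sum_two) (use i z in auto)
      also have "\<dots> = (w i - w j) * es l i - w j" unfolding ej by (simp add: algebra_simps)
      finally have LL: "L (es l) = (w i - w j) * es l i - w j" .
      have "(w i - w j) * es l i \<ge> 1 * es l i" by (rule mult_right_mono) (use i g in \<open>auto simp: w_def\<close>)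
      moreover have "w j \<le> int n" using i by (simp add: w_def)
      ultimately show ?thesis using Vdm LL by simp
    qed
    have Llow: "L (es l') \<ge> - C" if "l' \<in> I" for l'
    proof (cases l')
      case (Geo i)
      have "fac a 1 1 (Geo i) (es l') \<noteq> 0" using nz[OF that] Geo by simp
      then have "es l' i \<ge> 0" unfolding geo_nz by auto
      then show ?thesis using Lval[OF that] Geo C0 by simp
    next
      case (Mon i) then show ?thesis using Lval[OF that] by simp
    next
      case (Tfac i) with that show ?thesis by (simp add: I_def)
    next
      case (Vdm i j)
      have "fac a 1 1 (Vdm i j) (es l') \<noteq> 0" using nz[OF that] Vdm by simp
      then have "es l' i \<ge> 0" unfolding vdm_nz by auto
      moreover have "int n * 1 \<le> int n * a" by (rule mult_left_mono) (use a in auto)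
      ultimately show ?thesis using Lval[OF that] Vdm by (simp add: C_def)
    qed
    have "L (es l) = - (\<Sum>l'\<in>I - {l}. L (es l'))"
      using tot sum.remove[of I l "\<lambda>l. L (es l)"] l by (simp add: I_def)
    also have "\<dots> \<le> (\<Sum>l'\<in>I - {l}. C)"
    proof -
      have "(\<Sum>l'\<in>I - {l}. - L (es l')) \<le> (\<Sum>l'\<in>I - {l}. C)"
        by (rule sum_mono) (use Llow in force)
      then show ?thesis by (simp add: sum_negf)
    qed
    also have "\<dots> \<le> int (card I) * C"
      using C0 card_Diff1_le[of I l] by (simp add: I_def mult_right_mono)
    finally have Lup: "L (es l) \<le> int (card I) * C" .
    show ?thesis
    proof (cases l)
      case (Geo i)
      have e: "fac a 1 1 (Geo i) (es l) \<noteq> 0" using nz[OF l] Geo by simp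
      then have z: "\<And>v. v \<noteq> i \<Longrightarrow> es l v = 0" and g: "es l i \<ge> 0" unfolding geo_nz by auto
      show ?thesis using Lval[OF l] Lup Geo z g C0 a by (cases "v = i") (auto simp: N_def)
    next
      case (Mon i)
      have e: "es l = (\<lambda>v. if v = i then 1 - a else 0)" using nz[OF l] Mon mon_nz by metis
      have "0 \<le> int (card I) * C" using C0 by simp
      then show ?thesis using e a by (auto simp: N_def)
    next
      case (Tfac i) with l show ?thesis by (simp add: I_def)
    next
      case (Vdm i j)
      have e: "fac a 1 1 (Vdm i j) (es l) \<noteq> 0" using nz[OF l] Vdm by simp
      then have z: "\<And>v. v \<noteq> i \<Longrightarrow> v \<noteq> j \<Longrightarrow> es l v = 0" and g: "es l i \<ge> 0"
        and ej: "es l j = -1 - es l i" unfolding vdm_nz by auto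
      have "0 \<le> int (card I) * C" using C0 by simp
      then show ?thesis using Lval[OF l] Lup Vdm z g ej a
        by (cases "v = i"; cases "v = j") (auto simp: N_def)
    qed
  qed
  define FS where "FS = {f :: nat \<Rightarrow> int. \<forall>v. (v \<in> {1..n} \<longrightarrow> f v \<in> {-N..N}) \<and> (v \<notin> {1..n} \<longrightarrow> f v = 0)}"
  have fFS: "finite FS" unfolding FS_def by (rule finite_set_of_finite_funs) auto
  have fin: "finite {es :: fidx \<Rightarrow> nat \<Rightarrow> int. \<forall>l. (l \<in> I \<longrightarrow> es l \<in> FS) \<and> (l \<notin> I \<longrightarrow> es l = (\<lambda>v. 0))}"
    by (rule finite_set_of_finite_funs) (use fFS in \<open>auto simp: I_def\<close>)
  have "SA n a \<subseteq> {es. \<forall>l. (l \<in> I \<longrightarrow> es l \<in> FS) \<and> (l \<notin> I \<longrightarrow> es l = (\<lambda>v. 0))}"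
  proof (intro subsetI CollectI allI conjI impI)
    fix es l assume es: "es \<in> SA n a"
    { assume l: "l \<in> I"
      have nzl: "fac a 1 1 l (es l) \<noteq> 0" using es l by (auto simp: SA_def I_def)
      show "es l \<in> FS" unfolding FS_def
      proof (intro CollectI allI conjI impI)
        fix v assume "v \<in> {1..n}" then show "es l v \<in> {-N..N}" using bound[OF es l, of v] by auto
      next
        fix v assume "v \<notin> {1..n}"
        then have "v = 0 \<or> n < v" by auto
        then show "es l v = 0" using support[of l n a "es l" v] l nzl by (simp add: I_def)
      qed }
    { assume "l \<notin> I" then show "es l = (\<lambda>v. 0)" using es by (auto simp: SA_def I_def) }
  qed
  then show ?thesis using fin finite_subset by blast
qed

theorem corollary5p9:
  fixes a :: int and n :: nat
  assumes "0 < a" and "0 < n"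
  shows "M n a 1 1 = (\<Sum>k = 0..n. Psi (n - 1) k a 1 1)"
proof -
  obtain p where n: "n = Suc p" using assms(2) gr0_implies_Suc by blast
  define U where "U = (\<Union>k\<in>{0..Suc p}. SB p k a)"
  have bij: "bij_betw (chi p) (SA (Suc p) a) U"
  proof (rule bij_betw_byWitness[where f'="rho a p"])
    show "\<forall>x\<in>SA (Suc p) a. rho a p (chi p x) = x" using rho_chi by blast
    show "\<forall>y\<in>U. chi p (rho a p y) = y" unfolding U_def using chi_rho by blast
    show "chi p ` SA (Suc p) a \<subseteq> U" unfolding U_def using chi_in by blast
    show "rho a p ` U \<subseteq> SA (Suc p) a" unfolding U_def using rho_in[OF assms(1)] by blast
  qed
  have finU: "finite U" using bij_betw_finite[OF bij] finite_SA[OF assms(1)] by blast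
  have "card (SA (Suc p) a) = card U" using bij_betw_same_card[OF bij] .
  also have "\<dots> = (\<Sum>k\<in>{0..Suc p}. card (SB p k a))"
    unfolding U_def
  proof (rule card_UN_disjoint)
    show "finite {0..Suc p}" by simp
    show "\<forall>k\<in>{0..Suc p}. finite (SB p k a)"
      using finU unfolding U_def by (meson UN_I finite_subset subsetI)
    show "\<forall>i\<in>{0..Suc p}. \<forall>j\<in>{0..Suc p}. i \<noteq> j \<longrightarrow> SB p i a \<inter> SB p j a = {}"
    proof (intro ballI impI)
      fix i j :: nat assume "i \<noteq> j"
      show "SB p i a \<inter> SB p j a = {}"
      proof (rule ccontr)
        assume "SB p i a \<inter> SB p j a \<noteq> {}"
        then obtain es where "es \<in> SB p i a" "es \<in> SB p j a" by blast
        then have "\<forall>v. (\<Sum>l\<in>Psi_factors p. es l v) = (if v = 0 then int i else 0)"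
             "\<forall>v. (\<Sum>l\<in>Psi_factors p. es l v) = (if v = 0 then int j else 0)"
          unfolding SB_def by blast+
        then have "(\<Sum>l\<in>Psi_factors p. es l 0) = int i" "(\<Sum>l\<in>Psi_factors p. es l 0) = int j"
          by (metis (full_types))+
        with \<open>i \<noteq> j\<close> show False by simp
      qed
    qed
  qed
  finally have "card (SA (Suc p) a) = (\<Sum>k\<in>{0..Suc p}. card (SB p k a))" .
  then show ?thesis unfolding n M_card Psi_card by simp
qed

end
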